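(* Let $H$ be a real Hilbert space, $A:H\to c_0$ bounded linear with adjoint $A^*:\ell^1\to H$ (identifying $c_0^*=\ell^1$), let $H_n\subset H$ be a subspace of dimension $n$ with $\mathcal N(A)\cap H_n=\{0\}$. For $i=1,2$ let $f^i\in H$ and let $u^{n,i}$ be a solution of $$\min_{u\in\ell^1}\|u\|_1\quad\text{subject to}\quad \langle z,A^*u\rangle=\langle z,f^i\rangle\ \ \forall z\in H_n,$$ and let $v^{n,i}\in H_n$ be such that $Av^{n,i}\in\partial\|\cdot\|_1(u^{n,i})$ (such elements exist). Then $$D^{\mathrm{sym}}(u^{n,1},u^{n,2}):=\langle Av^{n,1}-Av^{n,2},\,u^{n,1}-u^{n,2}\rangle\le 2\kappa_n\|f^1-f^2\|$$ and $$\big|\|u^{n,1}\|_1-\|u^{n,2}\|_1\big|\le 2\kappa_n\|f^1-f^2\|.$$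
   Context: $A^*$ is defined by $\langle A^*u,z\rangle=\sum_iu_i(Az)_i$. $\partial\|\cdot\|_1(u)=\{\xi\in\ell^\infty:\|\xi\|_\infty\le1,\ \sum_i\xi_iu_i=\|u\|_1\}$. $\kappa_n=\sup_{z\in H_n\setminus\{0\}}\|z\|/\|Az\|_\infty$. The symmetric Bregman distance is $D^{\mathrm{sym}}(v,u)=\langle\xi_v-\xi_u,v-u\rangle$ for subgradients $\xi_v\in\partial\|\cdot\|_1(v)$, $\xi_u\in\partial\|\cdot\|_1(u)$. *)

theory Defs
  imports "HOL-Analysis.Analysis"
begin

text \<open>Elements of l^1, c_0, l^infinity are modelled as real sequences nat => real.\<close>

definition in_l1 :: "(nat \<Rightarrow> real) \<Rightarrow> bool" where
  "in_l1 u \<longleftrightarrow> summable (\<lambda>i. \<bar>u i\<bar>)"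

definition l1norm :: "(nat \<Rightarrow> real) \<Rightarrow> real" where
  "l1norm u = (\<Sum>i. \<bar>u i\<bar>)"

definition pairing :: "(nat \<Rightarrow> real) \<Rightarrow> (nat \<Rightarrow> real) \<Rightarrow> real" where
  "pairing xi u = (\<Sum>i. xi i * u i)"

definition supnorm :: "(nat \<Rightarrow> real) \<Rightarrow> real" where
  "supnorm x = (SUP i. \<bar>x i\<bar>)"

definition subdiff_l1 :: "(nat \<Rightarrow> real) \<Rightarrow> (nat \<Rightarrow> real) set" where
  "subdiff_l1 u = {xi. (\<forall>i. \<bar>xi i\<bar> \<le> 1) \<and> pairing xi u = l1norm u}"

definition bounded_linear_c0 :: "('h::real_normed_vector \<Rightarrow> nat \<Rightarrow> real) \<Rightarrow> bool" where
  "bounded_linear_c0 A \<longleftrightarrow>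
     (\<forall>x y i. A (x + y) i = A x i + A y i) \<and>
     (\<forall>c x i. A (c *\<^sub>R x) i = c * A x i) \<and>
     (\<exists>K. \<forall>x i. \<bar>A x i\<bar> \<le> K * norm x) \<and>
     (\<forall>x. (\<lambda>i. A x i) \<longlonglongrightarrow> 0)"

text \<open>Feasible set: <z, A^* u> = <z, f> for all z in Hn, where by definition of the adjoint
  <A^* u, z> = sum_i u_i (A z)_i.\<close>
definition feasible :: "('h::real_inner \<Rightarrow> nat \<Rightarrow> real) \<Rightarrow> 'h set \<Rightarrow> 'h \<Rightarrow> (nat \<Rightarrow> real) \<Rightarrow> bool" where
  "feasible A Hn f u \<longleftrightarrow> in_l1 u \<and> (\<forall>z\<in>Hn. (\<Sum>i. u i * A z i) = inner z f)"

definition is_l1_min_solution ::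
  "('h::real_inner \<Rightarrow> nat \<Rightarrow> real) \<Rightarrow> 'h set \<Rightarrow> 'h \<Rightarrow> (nat \<Rightarrow> real) \<Rightarrow> bool" where
  "is_l1_min_solution A Hn f u \<longleftrightarrow>
     feasible A Hn f u \<and> (\<forall>w. feasible A Hn f w \<longrightarrow> l1norm u \<le> l1norm w)"

text \<open>kappa_n = sup over Hn - {0} of ||z|| / ||Az||_inf. The value 0 is added to the set
  (harmless, all quotients are nonnegative) so that the sup is well defined also if Hn = {0}.\<close>
definition kappa :: "('h::real_normed_vector \<Rightarrow> nat \<Rightarrow> real) \<Rightarrow> 'h set \<Rightarrow> real" where
  "kappa A Hn = Sup (insert 0 ((\<lambda>z. norm z / supnorm (A z)) ` (Hn - {0})))"

definition Dsym :: "(nat \<Rightarrow> real) \<Rightarrow> (nat \<Rightarrow> real) \<Rightarrow> (nat \<Rightarrow> real) \<Rightarrow> (nat \<Rightarrow> real) \<Rightarrow> real" where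
  "Dsym xi1 xi2 u1 u2 = pairing (\<lambda>i. xi1 i - xi2 i) (\<lambda>i. u1 i - u2 i)"

end

theory Submission
  imports Defs
begin

lemma infdist_bound:
  fixes x :: "'a::real_normed_vector"
  assumes "subspace S" "w \<in> S"
  shows "\<bar>t\<bar> * infdist x S \<le> norm (w + t *\<^sub>R x)"
proof (cases "t = 0")
  case True then show ?thesis by simp
next
  case False
  have "- (w /\<^sub>R t) \<in> S" using assms by (simp add: subspace_neg subspace_scale)
  then have "infdist x S \<le> dist x (- (w /\<^sub>R t))" by (rule infdist_le)
  also have "\<dots> = norm (x + w /\<^sub>R t)" by (simp add: dist_norm)
  finally have "\<bar>t\<bar> * infdist x S \<le> \<bar>t\<bar> * norm (x + w /\<^sub>R t)"
    by (simp add: mult_left_mono)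
  also have "\<bar>t\<bar> * norm (x + w /\<^sub>R t) = norm (t *\<^sub>R (x + w /\<^sub>R t))" by simp
  also have "t *\<^sub>R (x + w /\<^sub>R t) = w + t *\<^sub>R x" using False
    by (simp add: scaleR_add_right algebra_simps)
  finally show ?thesis .
qed

lemma closed_span_finite:
  fixes B :: "'a::{real_normed_vector,complete_space} set"
  assumes "finite B"
  shows "closed (span B)"
  using assms
proof (induction B rule: finite_induct)
  case empty then show ?case by simp
next
  case (insert b B)
  show ?case
  proof (cases "b \<in> span B")
    case True then show ?thesis using insert by (simp add: span_redundant)
  next
    case False
    have d: "infdist b (span B) > 0"
      using infdist_pos_not_in_closed[OF insert.IH _ False] span_zero by blast
    define d where "d = infdist b (span B)"
    have dpos: "d > 0" using d d_def by simp
    show ?thesis unfolding closed_sequential_limits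
    proof (intro allI impI, elim conjE)
      fix z l assume zin: "\<forall>n. z n \<in> span (insert b B)" and zl: "z \<longlonglongrightarrow> l"
      define t where "t n = (SOME k. z n - k *\<^sub>R b \<in> span B)" for n
      have tin: "z n - t n *\<^sub>R b \<in> span B" for n
        using zin unfolding span_insert t_def by (metis (mono_tags, lifting) mem_Collect_eq someI)
      have tb: "\<bar>t m - t n\<bar> * d \<le> norm (z m - z n)" for m n
      proof -
        have "(z m - t m *\<^sub>R b) - (z n - t n *\<^sub>R b) \<in> span B" using tin span_diff by blast
        from infdist_bound[OF subspace_span this, of "t m - t n" b]
        show ?thesis unfolding d_def by (simp add: algebra_simps)
      qed
      have "Cauchy z" using zl LIMSEQ_imp_Cauchy by blast
      have "Cauchy t"
      proof (rule metric_CauchyI)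
        fix e :: real assume "e > 0"
        then obtain M where M: "\<forall>m\<ge>M. \<forall>n\<ge>M. dist (z m) (z n) < e * d"
          using \<open>Cauchy z\<close> dpos unfolding Cauchy_def by (meson mult_pos_pos)
        show "\<exists>M. \<forall>m\<ge>M. \<forall>n\<ge>M. dist (t m) (t n) < e"
        proof (intro exI allI impI)
          fix m n assume "m \<ge> M" "n \<ge> M"
          then have "\<bar>t m - t n\<bar> * d < e * d" proof -
            have "norm (z m - z n) < e * d" using M \<open>m \<ge> M\<close> \<open>n \<ge> M\<close> by (auto simp: dist_norm)
            then show ?thesis using tb[of m n] by linarith
          qed
          then show "dist (t m) (t n) < e" using dpos by (simp add: dist_real_def)
        qed
      qed
      then obtain t0 where t0: "t \<longlonglongrightarrow> t0" using Cauchy_convergent_iff convergent_def by blast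
      have "(\<lambda>n. z n - t n *\<^sub>R b) \<longlonglongrightarrow> l - t0 *\<^sub>R b"
        by (intro tendsto_intros zl t0)
      then have "l - t0 *\<^sub>R b \<in> span B"
        using insert.IH tin unfolding closed_sequential_limits
        by (metis (no_types, lifting))
      then show "l \<in> span (insert b B)" unfolding span_insert by blast
    qed
  qed
qed

lemma bdd_below_span:
  fixes q :: "'a::{real_normed_vector,complete_space} \<Rightarrow> 'b::real_normed_vector"
  assumes q: "bounded_linear q" and fin: "finite B" and inj: "inj_on q (span B)"
  shows "\<exists>c>0. \<forall>z\<in>span B. c * norm z \<le> norm (q z)"
  using fin inj
proof (induction B rule: finite_induct)
  case empty then show ?case by (intro exI[of _ 1]) simp
next
  case (insert b B)
  have lin: "linear q" using q bounded_linear.linear by blast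
  have "inj_on q (span B)" using insert.prems span_mono[of B "insert b B"] inj_on_subset by blast
  then obtain c where c: "c > 0" "\<forall>z\<in>span B. c * norm z \<le> norm (q z)" using insert.IH by blast
  show ?case
  proof (cases "b \<in> span B")
    case True then show ?thesis using c by (simp add: span_redundant) blast
  next
    case False
    have "\<exists>d>0. \<forall>w\<in>span B. d \<le> norm (q b - q w)"
    proof (rule ccontr)
      assume "\<not> ?thesis"
      then have "\<forall>k::nat. \<exists>w\<in>span B. norm (q b - q w) < 1 / (real k + 1)"
        by (metis (no_types, lifting) not_le of_nat_0_le_iff zero_less_divide_1_iff
            add_nonneg_pos zero_less_one)
      then obtain w where w: "\<And>k. w k \<in> span B" "\<And>k. norm (q b - q (w k)) < 1 / (real k + 1)"
        by metis
      have "(\<lambda>k. q (w k)) \<longlonglongrightarrow> q b"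
      proof (rule LIMSEQ_I)
        fix r :: real assume "r > 0"
        then obtain N :: nat where N: "1 / (real N + 1) < r"
          by (metis add.commute nat_approx_posE of_nat_Suc)
        show "\<exists>no. \<forall>n\<ge>no. norm (q (w n) - q b) < r"
        proof (intro exI allI impI)
          fix n assume "n \<ge> N"
          then have "1 / (real n + 1) \<le> 1 / (real N + 1)" by (simp add: frac_le)
          then show "norm (q (w n) - q b) < r" using w(2)[of n] N by (simp add: norm_minus_commute)
        qed
      qed
      then have cq: "Cauchy (\<lambda>k. q (w k))" using LIMSEQ_imp_Cauchy by blast
      have "Cauchy w"
      proof (rule metric_CauchyI)
        fix e :: real assume "e > 0"
        then obtain M where M: "\<forall>m\<ge>M. \<forall>n\<ge>M. dist (q (w m)) (q (w n)) < e * c"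
          using cq c unfolding Cauchy_def by (meson mult_pos_pos)
        show "\<exists>M. \<forall>m\<ge>M. \<forall>n\<ge>M. dist (w m) (w n) < e"
        proof (intro exI allI impI)
          fix m n assume mn: "m \<ge> M" "n \<ge> M"
          have "w m - w n \<in> span B" using w(1) span_diff by blast
          then have "c * norm (w m - w n) \<le> norm (q (w m - w n))" using c by blast
          also have "\<dots> = norm (q (w m) - q (w n))" using lin by (simp add: linear_diff)
          also have "\<dots> < e * c" using M mn by (simp add: dist_norm)
          finally show "dist (w m) (w n) < e" using c by (simp add: dist_norm mult.commute)
        qed
      qed
      then obtain w0 where w0: "w \<longlonglongrightarrow> w0" using Cauchy_convergent_iff convergent_def by blast
      have w0B: "w0 \<in> span B"
        using closed_span_finite[OF insert.hyps(1)] w(1) w0 unfolding closed_sequential_limits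
        by (metis (no_types, lifting))
      have "(\<lambda>k. q (w k)) \<longlonglongrightarrow> q w0" using w0 bounded_linear.tendsto[OF q] by blast
      then have "q w0 = q b" using \<open>(\<lambda>k. q (w k)) \<longlonglongrightarrow> q b\<close> LIMSEQ_unique by blast
      moreover have "w0 \<in> span (insert b B)" using w0B span_mono[of B "insert b B"] by blast
      moreover have "b \<in> span (insert b B)" by (simp add: span_base)
      ultimately have "b = w0" using insert.prems inj_on_def by metis
      then show False using False w0B by simp
    qed
    then obtain d where dp: "d > 0" and dw: "\<forall>w\<in>span B. d \<le> norm (q b - q w)" by blast
    define C where "C = (1 / c) * (1 + norm (q b) / d) + norm b / d"
    have Cpos: "C > 0" unfolding C_def using c dp by (simp add: add_pos_nonneg)
    show ?thesis
    proof (intro exI[of _ "1 / C"] conjI ballI)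
      show "1 / C > 0" using Cpos by simp
      fix z assume "z \<in> span (insert b B)"
      then obtain t where wt: "z - t *\<^sub>R b \<in> span B" unfolding span_insert by blast
      define w where "w = z - t *\<^sub>R b"
      have wB: "w \<in> span B" using wt w_def by simp
      have qz: "q z = q w + t *\<^sub>R q b" unfolding w_def
        using lin by (simp add: linear_diff linear_scale)
      have t1: "\<bar>t\<bar> * d \<le> norm (q z)"
      proof (cases "t = 0")
        case True then show ?thesis by simp
      next
        case False
        have "- (w /\<^sub>R t) \<in> span B" using wB by (simp add: span_neg span_scale)
        then have "d \<le> norm (q b - q (- (w /\<^sub>R t)))" using dw by blast
        also have "q b - q (- (w /\<^sub>R t)) = q b + (1 / t) *\<^sub>R q w"
          using lin by (simp add: linear_neg linear_scale divide_inverse)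
        finally have "\<bar>t\<bar> * d \<le> \<bar>t\<bar> * norm (q b + (1 / t) *\<^sub>R q w)"
          by (simp add: mult_left_mono)
        also have "\<dots> = norm (t *\<^sub>R (q b + (1 / t) *\<^sub>R q w))" by simp
        also have "t *\<^sub>R (q b + (1 / t) *\<^sub>R q w) = q z" using False qz
          by (simp add: scaleR_add_right algebra_simps)
        finally show ?thesis .
      qed
      have t2: "\<bar>t\<bar> \<le> norm (q z) / d" using t1 dp by (simp add: le_divide_eq)
      have "norm (q w) \<le> norm (q z) + norm (t *\<^sub>R q b)"
        using qz norm_triangle_ineq4[of "q z" "t *\<^sub>R q b"] by simp
      also have "\<dots> = norm (q z) + \<bar>t\<bar> * norm (q b)" by simp
      also have "\<dots> \<le> norm (q z) + norm (q z) / d * norm (q b)"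
        using mult_right_mono[OF t2 norm_ge_zero[of "q b"]] by simp
      finally have qw: "norm (q w) \<le> norm (q z) * (1 + norm (q b) / d)" by (simp add: algebra_simps)
      have nw: "norm w \<le> (1 / c) * norm (q w)" using c wB by (simp add: field_simps)
      have "norm z \<le> norm w + norm (t *\<^sub>R b)" unfolding w_def
        using norm_triangle_ineq[of "z - t *\<^sub>R b" "t *\<^sub>R b"] by simp
      also have "\<dots> = norm w + \<bar>t\<bar> * norm b" by simp
      also have "\<dots> \<le> (1 / c) * (norm (q z) * (1 + norm (q b) / d)) + norm (q z) / d * norm b"
        using nw qw t2 c(1) by (intro add_mono order_trans[OF nw] mult_left_mono mult_right_mono) auto
      also have "\<dots> = C * norm (q z)" unfolding C_def by (simp add: algebra_simps)
      finally show "1 / C * norm z \<le> norm (q z)" using Cpos by (simp add: field_simps)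
    qed
  qed
qed

lemma sum_le_l1:
  assumes u: "in_l1 u" and x: "\<forall>i. \<bar>x i\<bar> \<le> 1"
  shows "summable (\<lambda>i. x i * u i)" "summable (\<lambda>i. u i * x i)" "(\<Sum>i. u i * x i) \<le> l1norm u"
proof -
  have su: "summable (\<lambda>i. \<bar>u i\<bar>)" using u in_l1_def by simp
  have b: "norm (x i * u i) \<le> \<bar>u i\<bar>" for i
    using x mult_right_mono[of "\<bar>x i\<bar>" 1 "\<bar>u i\<bar>"] by (simp add: abs_mult)
  show s1: "summable (\<lambda>i. x i * u i)" by (rule summable_comparison_test[OF _ su]) (use b in auto)
  show s2: "summable (\<lambda>i. u i * x i)" using s1 by (simp add: mult.commute)
  have "u i * x i \<le> \<bar>u i\<bar>" for i using b[of i] by (simp add: mult.commute)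
  then show "(\<Sum>i. u i * x i) \<le> l1norm u" unfolding l1norm_def
    by (intro suminf_le s2 su) auto
qed

theorem proposition3:
  fixes A :: "'h::{real_inner, complete_space} \<Rightarrow> nat \<Rightarrow> real"
    and Hn :: "'h set" and n :: nat
    and f1 f2 :: 'h and u1 u2 :: "nat \<Rightarrow> real" and v1 v2 :: 'h
  assumes A: "bounded_linear_c0 A"
    and Hn_sub: "subspace Hn" and Hn_fin: "\<exists>B. finite B \<and> span B = Hn" and Hn_dim: "dim Hn = n"
    and null: "\<forall>z\<in>Hn. (\<forall>i. A z i = 0) \<longrightarrow> z = 0"
    and u1: "is_l1_min_solution A Hn f1 u1"
    and u2: "is_l1_min_solution A Hn f2 u2"
    and v1: "v1 \<in> Hn" "A v1 \<in> subdiff_l1 u1"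
    and v2: "v2 \<in> Hn" "A v2 \<in> subdiff_l1 u2"
  shows "Dsym (A v1) (A v2) u1 u2 \<le> 2 * kappa A Hn * norm (f1 - f2) \<and>
         \<bar>l1norm u1 - l1norm u2\<bar> \<le> 2 * kappa A Hn * norm (f1 - f2)"
proof -
  have Aadd: "\<And>x y i. A (x + y) i = A x i + A y i" using A bounded_linear_c0_def by blast
  have Ascale: "\<And>c x i. A (c *\<^sub>R x) i = c * A x i" using A bounded_linear_c0_def by blast
  obtain K where K: "\<And>x i. \<bar>A x i\<bar> \<le> K * norm x" using A bounded_linear_c0_def by blast
  have Adiff: "A (x - y) i = A x i - A y i" for x y i
  proof -
    have "x - y = x + (-1) *\<^sub>R y" by simp
    then have "A (x - y) i = A x i + A ((-1) *\<^sub>R y) i" using Aadd by metis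
    then show ?thesis using Ascale[of "-1" y i] by simp
  qed
  have Amem: "A z \<in> bcontfun" for z
    by (rule bcontfun_normI[where b="K * norm z"]) (auto simp: K)
  define T where "T z = (Bcontfun (A z) :: nat \<Rightarrow>\<^sub>C real)" for z
  have Tapp: "apply_bcontfun (T z) = A z" for z unfolding T_def using Amem Bcontfun_inverse by blast
  have Tnorm: "norm (T z) = supnorm (A z)" for z
    unfolding norm_bcontfun_def dist_bcontfun.rep_eq zero_bcontfun.rep_eq Tapp supnorm_def
    by simp
  have Tlin: "bounded_linear T"
  proof (rule bounded_linear_intro[where K=K])
    show "T (x + y) = T x + T y" for x y by (rule bcontfun_eqI) (simp add: plus_bcontfun.rep_eq Tapp Aadd)
    show "T (r *\<^sub>R x) = r *\<^sub>R T x" for r x by (rule bcontfun_eqI) (simp add: scaleR_bcontfun.rep_eq Tapp Ascale)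
    show "norm (T x) \<le> norm x * K" for x
      by (rule norm_bound) (simp add: Tapp K mult.commute)
  qed
  obtain B where B: "finite B" "span B = Hn" using Hn_fin by blast
  have inj: "inj_on T (span B)"
  proof (rule inj_onI)
    fix x y assume xy: "x \<in> span B" "y \<in> span B" "T x = T y"
    then have "A x = A y" using Tapp by metis
    then have "\<forall>i. A (x - y) i = 0" by (simp add: Adiff)
    moreover have "x - y \<in> Hn" using xy B(2) span_diff by blast
    ultimately show "x = y" using null by auto
  qed
  obtain c where c: "c > 0" "\<forall>z\<in>Hn. c * norm z \<le> norm (T z)"
    using bdd_below_span[OF Tlin B(1) inj] unfolding B(2) by blast
  define g where "g z = norm z / supnorm (A z)" for z
  have gb: "g z \<le> 1 / c" if "z \<in> Hn" "z \<noteq> 0" for z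
  proof -
    have "c * norm z \<le> supnorm (A z)" using c that Tnorm by metis
    moreover have "c * norm z > 0" using c that by simp
    ultimately show ?thesis unfolding g_def using c by (simp add: field_simps)
  qed
  have bdd: "bdd_above (insert 0 (g ` (Hn - {0})))"
    using gb c by (intro bdd_aboveI[of _ "1/c"]) auto
  have kap: "kappa A Hn = Sup (insert 0 (g ` (Hn - {0})))" unfolding kappa_def g_def by simp
  have k0: "kappa A Hn \<ge> 0" unfolding kap by (rule cSup_upper[OF _ bdd]) simp
  have key: "norm z \<le> kappa A Hn * supnorm (A z)" if "z \<in> Hn" for z
  proof (cases "z = 0")
    case True then show ?thesis using k0 Tnorm[of z] by (metis mult_nonneg_nonneg norm_ge_zero norm_zero)
  next
    case False
    have sp: "supnorm (A z) > 0"
    proof -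
      have "c * norm z \<le> supnorm (A z)" using c that Tnorm by metis
      moreover have "c * norm z > 0" using c False by simp
      ultimately show ?thesis by simp
    qed
    have "g z \<le> kappa A Hn" unfolding kap using False that by (intro cSup_upper[OF _ bdd]) auto
    then have "g z * supnorm (A z) \<le> kappa A Hn * supnorm (A z)" using sp by (simp add: mult_right_mono)
    then show ?thesis unfolding g_def using sp by simp
  qed
  have sub1: "\<forall>i. \<bar>A v1 i\<bar> \<le> 1" "pairing (A v1) u1 = l1norm u1" using v1(2) subdiff_l1_def by auto
  have sub2: "\<forall>i. \<bar>A v2 i\<bar> \<le> 1" "pairing (A v2) u2 = l1norm u2" using v2(2) subdiff_l1_def by auto
  have nv: "norm v \<le> kappa A Hn" if "v \<in> Hn" "\<forall>i. \<bar>A v i\<bar> \<le> 1" for v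
  proof -
    have "supnorm (A v) \<le> 1" unfolding Tnorm[symmetric] by (rule norm_bound) (simp add: Tapp that)
    then have "kappa A Hn * supnorm (A v) \<le> kappa A Hn" using k0 by (simp add: mult_left_le)
    then show ?thesis using key[OF that(1)] by simp
  qed
  have nv1: "norm v1 \<le> kappa A Hn" using nv v1(1) sub1(1) by blast
  have nv2: "norm v2 \<le> kappa A Hn" using nv v2(1) sub2(1) by blast
  have l1u1: "in_l1 u1" and l1u2: "in_l1 u2"
    using u1 u2 unfolding is_l1_min_solution_def feasible_def by auto
  have fe1: "\<And>z. z \<in> Hn \<Longrightarrow> (\<Sum>i. u1 i * A z i) = inner z f1"
    using u1 unfolding is_l1_min_solution_def feasible_def by auto
  have fe2: "\<And>z. z \<in> Hn \<Longrightarrow> (\<Sum>i. u2 i * A z i) = inner z f2"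
    using u2 unfolding is_l1_min_solution_def feasible_def by auto
  note s11 = sum_le_l1[OF l1u1 sub1(1)]
  note s12 = sum_le_l1[OF l1u2 sub1(1)]
  note s21 = sum_le_l1[OF l1u1 sub2(1)]
  note s22 = sum_le_l1[OF l1u2 sub2(1)]
  have swap: "(\<Sum>i. x i * u i) = (\<Sum>i. u i * x i)" for x u :: "nat \<Rightarrow> real" by (simp add: mult.commute)
  have e11: "l1norm u1 = inner v1 f1" using sub1(2) fe1[OF v1(1)] unfolding pairing_def swap by simp
  have e22: "l1norm u2 = inner v2 f2" using sub2(2) fe2[OF v2(1)] unfolding pairing_def swap by simp
  have e12: "(\<Sum>i. A v1 i * u2 i) = inner v1 f2" using fe2[OF v1(1)] unfolding swap by simp
  have e21: "(\<Sum>i. A v2 i * u1 i) = inner v2 f1" using fe1[OF v2(1)] unfolding swap by simp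
  have "Dsym (A v1) (A v2) u1 u2 =
      (\<Sum>i. (A v1 i * u1 i - A v1 i * u2 i) - (A v2 i * u1 i - A v2 i * u2 i))"
    unfolding Dsym_def pairing_def by (simp add: algebra_simps)
  also have "\<dots> = ((\<Sum>i. A v1 i * u1 i) - (\<Sum>i. A v1 i * u2 i)) - ((\<Sum>i. A v2 i * u1 i) - (\<Sum>i. A v2 i * u2 i))"
    using s11(1) s12(1) s21(1) s22(1)
    by (simp add: suminf_diff summable_diff)
  also have "\<dots> = inner (v1 - v2) (f1 - f2)"
    using e11 e22 e12 e21 sub1(2) sub2(2) unfolding pairing_def
    by (simp add: inner_diff_left inner_diff_right)
  also have "\<dots> \<le> norm (v1 - v2) * norm (f1 - f2)" by (rule norm_cauchy_schwarz)
  also have "\<dots> \<le> (2 * kappa A Hn) * norm (f1 - f2)"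
  proof (rule mult_right_mono)
    show "norm (v1 - v2) \<le> 2 * kappa A Hn" using norm_triangle_ineq4[of v1 v2] nv1 nv2 by linarith
  qed simp
  finally have D: "Dsym (A v1) (A v2) u1 u2 \<le> 2 * kappa A Hn * norm (f1 - f2)" .
  have kf: "kappa A Hn * norm (f1 - f2) \<le> 2 * kappa A Hn * norm (f1 - f2)"
    using k0 by (simp add: mult_nonneg_nonneg)
  have a1: "l1norm u1 - l1norm u2 \<le> kappa A Hn * norm (f1 - f2)"
  proof -
    have "inner v1 f2 \<le> l1norm u2" using s12(3) fe2[OF v1(1)] by simp
    then have "l1norm u1 - l1norm u2 \<le> inner v1 (f1 - f2)" using e11 by (simp add: inner_diff_right)
    also have "\<dots> \<le> norm v1 * norm (f1 - f2)" by (rule norm_cauchy_schwarz)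
    also have "\<dots> \<le> kappa A Hn * norm (f1 - f2)" using nv1 by (simp add: mult_right_mono)
    finally show ?thesis .
  qed
  have a2: "l1norm u2 - l1norm u1 \<le> kappa A Hn * norm (f1 - f2)"
  proof -
    have "inner v2 f1 \<le> l1norm u1" using s21(3) fe1[OF v2(1)] by simp
    then have "l1norm u2 - l1norm u1 \<le> inner v2 (f2 - f1)" using e22 by (simp add: inner_diff_right)
    also have "\<dots> \<le> norm v2 * norm (f2 - f1)" by (rule norm_cauchy_schwarz)
    also have "\<dots> = norm v2 * norm (f1 - f2)" by (simp add: norm_minus_commute)
    also have "\<dots> \<le> kappa A Hn * norm (f1 - f2)" using nv2 by (simp add: mult_right_mono)
    finally show ?thesis .
  qed
  show ?thesis using D a1 a2 kf by linarith
qed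

end
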